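(* In noiseless non-adaptive group testing with $N$ items and $K$ defectives, with random Bernoulli$(1/K)$ design and maximum-likelihood decoding, in the regime $N,K\to\infty$ with $K=o(N)$, approximate reconstruction of the defective set with up to $\alpha K$ misses (for a fixed small $\alpha\in(0,1)$) is achievable with $T=O(K\log N)$ tests, i.e. the probability that the decoded $K$-set misses more than $\alpha K$ defectives can be made arbitrarily small.
   Context: Design: $N\times T$ binary matrix with i.i.d. Bernoulli$(1/K)$ entries, $X_j(t)=1$ iff item $j$ is in test $t$. Noiseless outcomes $Y(t)=\bigvee_{j\in S}X_j(t)$ for the defective set $S$, $|S|=K$. The ML decoder outputs a $K$-subset $S'$ maximizing $p(Y^T\mid\mathbf X_{S'})$; an error is declared only if $|S\setminus S'|>\alpha K$. Probabilities are averaged over the random design and over $S$ uniform among $K$-subsets. *)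

theory Defs
  imports "HOL-Probability.Probability"
begin

text \<open>Items are 0..N-1, tests are 0..T-1. A design is X :: nat \<times> nat \<Rightarrow> bool,
  X (j,t) = True iff item j is in test t.\<close>

definition ksubsets :: "nat \<Rightarrow> nat \<Rightarrow> nat set set" where
  "ksubsets N K = {S. S \<subseteq> {0..<N} \<and> card S = K}"

definition outcome :: "nat \<Rightarrow> (nat \<times> nat \<Rightarrow> bool) \<Rightarrow> nat set \<Rightarrow> (nat \<Rightarrow> bool)" where
  "outcome T X S = (\<lambda>t. t < T \<and> (\<exists>j\<in>S. X (j, t)))"

definition likelihood :: "nat \<Rightarrow> (nat \<times> nat \<Rightarrow> bool) \<Rightarrow> nat set \<Rightarrow> (nat \<Rightarrow> bool) \<Rightarrow> real" where
  "likelihood T X S' Y = (if outcome T X S' = Y then 1 else 0)"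

definition ml_outputs :: "nat \<Rightarrow> nat \<Rightarrow> nat \<Rightarrow> (nat \<times> nat \<Rightarrow> bool) \<Rightarrow> (nat \<Rightarrow> bool) \<Rightarrow> nat set set" where
  "ml_outputs N K T X Y = {S' \<in> ksubsets N K. \<forall>S''\<in>ksubsets N K. likelihood T X S'' Y \<le> likelihood T X S' Y}"

text \<open>Error event (worst-case tie breaking): some ML output misses more than alpha K defectives.\<close>
definition ml_error :: "nat \<Rightarrow> nat \<Rightarrow> nat \<Rightarrow> real \<Rightarrow> (nat \<times> nat \<Rightarrow> bool) \<Rightarrow> nat set \<Rightarrow> bool" where
  "ml_error N K T \<alpha> X S = (\<exists>S'\<in>ml_outputs N K T X (outcome T X S). real (card (S - S')) > \<alpha> * real K)"

definition design :: "nat \<Rightarrow> nat \<Rightarrow> nat \<Rightarrow> (nat \<times> nat \<Rightarrow> bool) pmf" where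
  "design N K T = Pi_pmf ({0..<N} \<times> {0..<T}) False (\<lambda>_. bernoulli_pmf (1 / real K))"

definition err_prob :: "nat \<Rightarrow> nat \<Rightarrow> nat \<Rightarrow> real \<Rightarrow> real" where
  "err_prob N K T \<alpha> = measure_pmf.prob (pair_pmf (design N K T) (pmf_of_set (ksubsets N K)))
      {(X, S). ml_error N K T \<alpha> X S}"

end

theory Submission
  imports Defs
begin

definition dist_t :: "nat set \<Rightarrow> nat set \<Rightarrow> (nat \<times> nat \<Rightarrow> bool) \<Rightarrow> nat \<Rightarrow> bool" where
  "dist_t D S' X t = ((\<exists>j\<in>D. X (j,t)) \<and> (\<forall>i\<in>S'. \<not> X (i,t)))"

lemma prob_Pi_false:
  fixes N t :: nat and A :: "nat set" and q :: real
  assumes q: "0 \<le> q" "q \<le> 1" and A: "A \<subseteq> {0..<N}"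
  shows "measure_pmf.prob (Pi_pmf ({0..<N} \<times> {t}) False (\<lambda>_. bernoulli_pmf q))
           {g. \<forall>i\<in>A. \<not> g (i,t)} = (1-q) ^ card A"
proof -
  let ?I = "{0..<N} \<times> {t}"
  have eq: "{g. \<forall>i\<in>A. \<not> g (i,t)} = Pi ?I (\<lambda>x. if fst x \<in> A then {False} else UNIV)"
    using A by (auto simp: Pi_def)
  have "measure_pmf.prob (Pi_pmf ?I False (\<lambda>_. bernoulli_pmf q)) {g. \<forall>i\<in>A. \<not> g (i,t)}
     = (\<Prod>x\<in>?I. measure_pmf.prob (bernoulli_pmf q) (if fst x \<in> A then {False} else UNIV))"
    unfolding eq by (intro measure_Pi_pmf_Pi finite_cartesian_product) auto
  also have "\<dots> = (\<Prod>x\<in>?I. if fst x \<in> A then 1 - q else 1)"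
    using q by (intro prod.cong) (auto simp: measure_pmf_single)
  also have "\<dots> = (\<Prod>x\<in>{x\<in>?I. fst x \<in> A}. 1 - q)"
    by (subst prod.inter_filter[symmetric]) auto
  also have "{x\<in>?I. fst x \<in> A} = A \<times> {t}" using A by auto
  also have "(\<Prod>x\<in>A \<times> {t}. 1 - q) = (1-q) ^ card A"
    by (simp add: card_cartesian_product)
  finally show ?thesis .
qed

lemma prob_col:
  fixes N t :: nat and q :: real
  assumes q: "0 \<le> q" "q \<le> 1" and D: "D \<subseteq> {0..<N}" and S: "S' \<subseteq> {0..<N}" and dis: "D \<inter> S' = {}"
  shows "measure_pmf.prob (Pi_pmf ({0..<N} \<times> {t}) False (\<lambda>_. bernoulli_pmf q))
           {g. dist_t D S' g t} = (1-q) ^ card S' - (1-q) ^ (card S' + card D)"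
proof -
  let ?M = "Pi_pmf ({0..<N} \<times> {t}) False (\<lambda>_. bernoulli_pmf q)"
  have fin: "finite D" "finite S'" using D S finite_subset by auto
  have e: "{g. dist_t D S' g t} = {g. \<forall>i\<in>S'. \<not> g (i,t)} - {g. \<forall>i\<in>D \<union> S'. \<not> g (i,t)}"
    by (auto simp: dist_t_def)
  have "measure_pmf.prob ?M {g. dist_t D S' g t} = measure_pmf.prob ?M {g. \<forall>i\<in>S'. \<not> g (i,t)} - measure_pmf.prob ?M {g. \<forall>i\<in>D \<union> S'. \<not> g (i,t)}"
    unfolding e by (rule measure_pmf.finite_measure_Diff) auto
  also have "\<dots> = (1-q) ^ card S' - (1-q) ^ card (D \<union> S')"
    using q D S by (simp add: prob_Pi_false)
  also have "card (D \<union> S') = card S' + card D" using fin dis by (simp add: card_Un_disjoint)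
  finally show ?thesis .
qed

lemma prob_pair_times:
  "measure_pmf.prob (pair_pmf M N) (A \<times> B) = measure_pmf.prob M A * measure_pmf.prob N B"
proof -
  have "measure_pmf.prob (pair_pmf M N) (A \<times> B) =
        measure_pmf.prob (pair_pmf M N) ((A \<inter> set_pmf M) \<times> (B \<inter> set_pmf N))"
    by (subst (1 2) measure_Int_set_pmf[symmetric]) (auto intro!: arg_cong[where f="measure_pmf.prob _"])
  also have "\<dots> = measure_pmf.prob M (A \<inter> set_pmf M) * measure_pmf.prob N (B \<inter> set_pmf N)"
    by (rule measure_pmf_prob_product) auto
  also have "\<dots> = measure_pmf.prob M A * measure_pmf.prob N B"
    by (simp add: measure_Int_set_pmf)
  finally show ?thesis .
qed

lemma prob_consistent:
  fixes N :: nat and q :: real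
  assumes q: "0 \<le> q" "q \<le> 1" and D: "D \<subseteq> {0..<N}" and S: "S' \<subseteq> {0..<N}" and dis: "D \<inter> S' = {}"
  shows "measure_pmf.prob (Pi_pmf ({0..<N} \<times> {0..<T}) False (\<lambda>_. bernoulli_pmf q))
           {X. \<forall>t<T. \<not> dist_t D S' X t} = (1 - ((1-q) ^ card S' - (1-q) ^ (card S' + card D))) ^ T"
proof (induction T)
  case 0
  then show ?case by simp
next
  case (Suc T)
  let ?p = "(1-q) ^ card S' - (1-q) ^ (card S' + card D)"
  let ?A = "{0..<N} \<times> {0..<T}" and ?B = "{0..<N} \<times> {T}"
  let ?P = "\<lambda>I. Pi_pmf I False (\<lambda>_. bernoulli_pmf q)"
  define h where "h = (\<lambda>(f::nat\<times>nat\<Rightarrow>bool,g::nat\<times>nat\<Rightarrow>bool) x. if x \<in> ?A then f x else g x)"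
  have un: "{0..<N} \<times> {0..<Suc T} = ?A \<union> ?B" by auto
  have "?P ({0..<N} \<times> {0..<Suc T}) = map_pmf h (pair_pmf (?P ?A) (?P ?B))"
    unfolding un h_def by (rule Pi_pmf_union) auto
  hence "measure_pmf.prob (?P ({0..<N} \<times> {0..<Suc T})) {X. \<forall>t<Suc T. \<not> dist_t D S' X t}
      = measure_pmf.prob (pair_pmf (?P ?A) (?P ?B)) (h -` {X. \<forall>t<Suc T. \<not> dist_t D S' X t})"
    by simp
  also have "h -` {X. \<forall>t<Suc T. \<not> dist_t D S' X t} =
     {X. \<forall>t<T. \<not> dist_t D S' X t} \<times> (UNIV - {g. dist_t D S' g T})"
  proof -
    have "(\<forall>t<Suc T. \<not> dist_t D S' (h (f,g)) t) \<longleftrightarrow> (\<forall>t<T. \<not> dist_t D S' f t) \<and> \<not> dist_t D S' g T" for f g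
    proof -
      have a: "dist_t D S' (h (f,g)) t = dist_t D S' f t" if "t < T" for t
        using that D S unfolding dist_t_def h_def by (auto simp: subset_iff)
      have b: "dist_t D S' (h (f,g)) T = dist_t D S' g T"
        unfolding dist_t_def h_def by auto
      have c: "(\<forall>t<Suc T. \<not> dist_t D S' (h (f,g)) t) = ((\<forall>t<T. \<not> dist_t D S' (h (f,g)) t) \<and> \<not> dist_t D S' (h (f,g)) T)"
        by (auto simp: less_Suc_eq)
      have d: "(\<forall>t<T. \<not> dist_t D S' (h (f,g)) t) = (\<forall>t<T. \<not> dist_t D S' f t)"
        using a by auto
      show ?thesis using c b d by simp
    qed
    thus ?thesis by auto
  qed
  also have "measure_pmf.prob (pair_pmf (?P ?A) (?P ?B)) \<dots> =
     measure_pmf.prob (?P ?A) {X. \<forall>t<T. \<not> dist_t D S' X t} * measure_pmf.prob (?P ?B) (UNIV - {g. dist_t D S' g T})"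
    by (rule prob_pair_times)
  also have "measure_pmf.prob (?P ?B) (UNIV - {g. dist_t D S' g T}) = 1 - ?p"
    using measure_pmf.prob_compl[of "{g. dist_t D S' g T}" "?P ?B"] prob_col[OF q D S dis, of T] by simp
  finally show ?case using Suc by simp
qed

lemma L1:
  fixes K :: nat assumes "2 \<le> K"
  shows "exp (-2) \<le> (1 - 1 / real K) ^ K"
proof -
  have x: "0 \<le> 1 / real K" "1 / real K \<le> 1/2" using assms by (auto simp: field_simps)
  have pos: "0 < 1 - 1 / real K" using assms by (auto simp: field_simps)
  have "- (1 / real K) - 2 * (1 / real K)^2 \<le> ln (1 - 1 / real K)"
    by (rule ln_one_minus_pos_lower_bound[OF x])
  hence "real K * (- (1 / real K) - 2 * (1 / real K)^2) \<le> real K * ln (1 - 1 / real K)"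
    by (intro mult_left_mono) auto
  moreover have "real K * (- (1 / real K) - 2 * (1 / real K)^2) = -1 - 2 / real K"
    using assms by (simp add: field_simps power2_eq_square)
  moreover have "2 / real K \<le> 1" using assms by (auto simp: field_simps)
  ultimately have "-2 \<le> real K * ln (1 - 1 / real K)" by linarith
  hence "exp (-2) \<le> exp (real K * ln (1 - 1 / real K))" by simp
  also have "\<dots> = (1 - 1 / real K) ^ K"
    using pos by (simp add: exp_of_nat_mult)
  finally show ?thesis .
qed

lemma L2:
  fixes K l :: nat and \<alpha> :: real assumes "0 < K" "\<alpha> * real K < real l"
  shows "(1 - 1 / real K) ^ l \<le> exp (-\<alpha>)"
proof -
  have "0 \<le> 1 - 1 / real K" using assms by (auto simp: field_simps)
  moreover have "1 - 1 / real K \<le> exp (- (1 / real K))"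
    using exp_ge_add_one_self[of "- (1 / real K)"] by simp
  ultimately have "(1 - 1 / real K) ^ l \<le> exp (- (1 / real K)) ^ l"
    by (intro power_mono) auto
  also have "\<dots> = exp (- (real l / real K))"
    by (simp add: exp_of_nat_mult[symmetric])
  also have "\<dots> \<le> exp (-\<alpha>)"
    using assms by (auto simp: field_simps)
  finally show ?thesis .
qed

lemma card_ksubsets: "card (ksubsets N K) = N choose K"
  unfolding ksubsets_def using n_subsets[of "{0..<N}" K] by simp

lemma finite_ksubsets: "finite (ksubsets N K)"
  unfolding ksubsets_def by (rule finite_subset[of _ "Pow {0..<N}"]) auto

lemma p_bounds:
  fixes K l :: nat and \<alpha> :: real
  assumes "2 \<le> K" "\<alpha> * real K < real l" "0 < \<alpha>"
  shows "exp (-2) * (1 - exp (-\<alpha>)) \<le> (1 - 1/real K) ^ K - (1 - 1/real K) ^ (K + l)"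
    and "(1 - 1/real K) ^ K - (1 - 1/real K) ^ (K + l) \<le> 1"
proof -
  have q0: "0 \<le> 1 - 1/real K" "1 - 1/real K \<le> 1" using assms by (auto simp: field_simps)
  have e: "(1 - 1/real K) ^ K - (1 - 1/real K) ^ (K + l) = (1 - 1/real K) ^ K * (1 - (1 - 1/real K) ^ l)"
    by (simp add: power_add algebra_simps)
  have a: "exp (-2) \<le> (1 - 1/real K) ^ K" by (rule L1) (use assms in auto)
  have b: "1 - exp (-\<alpha>) \<le> 1 - (1 - 1/real K) ^ l" using L2[of K \<alpha> l] assms by auto
  have "0 \<le> 1 - exp (-\<alpha>)" using assms by simp
  thus "exp (-2) * (1 - exp (-\<alpha>)) \<le> (1 - 1/real K) ^ K - (1 - 1/real K) ^ (K + l)"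
    unfolding e by (intro mult_mono a b) (use q0 in auto)
  have "(1 - 1/real K) ^ K \<le> 1" using q0 by (simp add: power_le_one)
  moreover have "0 \<le> (1 - 1/real K) ^ (K + l)" using q0 by simp
  ultimately show "(1 - 1/real K) ^ K - (1 - 1/real K) ^ (K + l) \<le> 1" by linarith
qed

lemma bound_S:
  fixes N K T :: nat and \<alpha> :: real
  assumes K2: "2 \<le> K" and KN: "K \<le> N" and S: "S \<in> ksubsets N K" and al: "0 < \<alpha>"
  shows "measure_pmf.prob (design N K T) {X. ml_error N K T \<alpha> X S}
           \<le> real (N choose K) * (1 - exp (-2) * (1 - exp (-\<alpha>))) ^ T"
proof -
  define c where "c = exp (-2) * (1 - exp (-\<alpha>))"
  define F where "F = {S'\<in>ksubsets N K. \<alpha> * real K < real (card (S - S'))}"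
  let ?E = "\<lambda>S'. {X. \<forall>t<T. \<not> dist_t (S - S') S' X t}"
  have finF: "finite F" unfolding F_def using finite_ksubsets by simp
  have sub: "{X. ml_error N K T \<alpha> X S} \<subseteq> (\<Union>S'\<in>F. ?E S')"
  proof
    fix X assume "X \<in> {X. ml_error N K T \<alpha> X S}"
    then obtain S' where S'o: "S' \<in> ml_outputs N K T X (outcome T X S)"
      and cardS': "real (card (S - S')) > \<alpha> * real K"
      unfolding ml_error_def by auto
    have S'k: "S' \<in> ksubsets N K"
      and le: "likelihood T X S (outcome T X S) \<le> likelihood T X S' (outcome T X S)"
      using S'o S unfolding ml_outputs_def by auto
    hence oeq: "outcome T X S' = outcome T X S"
      unfolding likelihood_def by (auto split: if_splits)
    have "\<not> dist_t (S - S') S' X t" if "t < T" for t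
    proof
      assume "dist_t (S - S') S' X t"
      then obtain j where "j \<in> S" "X (j,t)" "\<forall>i\<in>S'. \<not> X (i,t)" unfolding dist_t_def by auto
      hence "outcome T X S t \<noteq> outcome T X S' t" using that unfolding outcome_def by auto
      thus False using oeq by simp
    qed
    moreover have "S' \<in> F" using S'k cardS' unfolding F_def by auto
    ultimately show "X \<in> (\<Union>S'\<in>F. ?E S')" by auto
  qed
  have tm: "measure_pmf.prob (design N K T) (?E S') \<le> (1 - c) ^ T" if "S' \<in> F" for S'
  proof -
    have S'k: "S' \<subseteq> {0..<N}" "card S' = K" and l: "\<alpha> * real K < real (card (S - S'))"
      using that unfolding F_def ksubsets_def by auto
    have Ss: "S \<subseteq> {0..<N}" using S unfolding ksubsets_def by auto
    have q: "0 \<le> 1 / real K" "1 / real K \<le> 1" using K2 by auto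
    have "measure_pmf.prob (design N K T) (?E S') =
       (1 - ((1 - 1/real K) ^ card S' - (1 - 1/real K) ^ (card S' + card (S - S')))) ^ T"
      unfolding design_def by (rule prob_consistent) (use q Ss S'k in auto)
    also have "\<dots> \<le> (1 - c) ^ T"
      using p_bounds[OF K2 l al] unfolding c_def S'k(2) by (intro power_mono) auto
    finally show ?thesis .
  qed
  have "measure_pmf.prob (design N K T) {X. ml_error N K T \<alpha> X S}
        \<le> measure_pmf.prob (design N K T) (\<Union>S'\<in>F. ?E S')"
    by (rule measure_pmf.finite_measure_mono[OF sub]) simp
  also have "\<dots> \<le> (\<Sum>S'\<in>F. measure_pmf.prob (design N K T) (?E S'))"
    by (rule measure_pmf.finite_measure_subadditive_finite[OF finF]) simp
  also have "\<dots> \<le> (\<Sum>S'\<in>F. (1 - c) ^ T)"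
    by (rule sum_mono) (rule tm)
  also have "\<dots> = real (card F) * (1 - c) ^ T" by simp
  also have "\<dots> \<le> real (N choose K) * (1 - c) ^ T"
  proof (rule mult_right_mono)
    have "card F \<le> card (ksubsets N K)"
      unfolding F_def by (rule card_mono[OF finite_ksubsets]) auto
    thus "real (card F) \<le> real (N choose K)" by (simp add: card_ksubsets)
    have "c \<le> 1" unfolding c_def
      using al by (intro mult_le_one) auto
    thus "0 \<le> (1 - c) ^ T" by simp
  qed
  finally show ?thesis unfolding c_def .
qed

lemma err_bound:
  fixes N K T :: nat and \<alpha> :: real
  assumes K2: "2 \<le> K" and KN: "K \<le> N" and al: "0 < \<alpha>"
  shows "err_prob N K T \<alpha> \<le> real (N choose K) * (1 - exp (-2) * (1 - exp (-\<alpha>))) ^ T"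
proof -
  define b where "b = real (N choose K) * (1 - exp (-2) * (1 - exp (-\<alpha>))) ^ T"
  let ?A = "design N K T" and ?B = "pmf_of_set (ksubsets N K)"
  let ?E = "{(X, S). ml_error N K T \<alpha> X S}"
  have "{0..<K} \<in> ksubsets N K" using KN unfolding ksubsets_def by auto
  hence ne: "ksubsets N K \<noteq> {}" by auto
  have setB: "set_pmf ?B = ksubsets N K" using ne finite_ksubsets by simp
  have pe: "pair_pmf ?A ?B = bind_pmf ?B (\<lambda>S. map_pmf (\<lambda>X. (X, S)) ?A)"
    unfolding pair_pmf_def map_pmf_def by (rule bind_commute_pmf)
  have "emeasure (measure_pmf (pair_pmf ?A ?B)) ?E = (\<integral>\<^sup>+S. emeasure (measure_pmf (map_pmf (\<lambda>X. (X, S)) ?A)) ?E \<partial>measure_pmf ?B)"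
    unfolding pe by simp
  also have "\<dots> \<le> ennreal b"
  proof (intro measure_pmf.nn_integral_le_const AE_pmfI zero_le)
    fix S assume "S \<in> set_pmf ?B"
    hence S: "S \<in> ksubsets N K" using setB by simp
    have "emeasure (measure_pmf (map_pmf (\<lambda>X. (X, S)) ?A)) ?E = emeasure (measure_pmf ?A) {X. ml_error N K T \<alpha> X S}"
      by (simp add: vimage_def)
    also have "\<dots> = ennreal (measure_pmf.prob ?A {X. ml_error N K T \<alpha> X S})"
      by (simp add: measure_pmf.emeasure_eq_measure)
    also have "\<dots> \<le> ennreal b" unfolding b_def
      by (rule ennreal_leI, rule bound_S[OF K2 KN S al])
    finally show "emeasure (measure_pmf (map_pmf (\<lambda>X. (X, S)) ?A)) ?E \<le> ennreal b" .
  qed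
  finally have "emeasure (measure_pmf (pair_pmf ?A ?B)) ?E \<le> ennreal b" .
  moreover have b0: "0 \<le> b"
  proof -
    have "exp (-2) * (1 - exp (-\<alpha>)) \<le> 1" using al by (intro mult_le_one) auto
    thus ?thesis unfolding b_def by simp
  qed
  ultimately show ?thesis unfolding err_prob_def b_def
    by (simp add: measure_pmf.emeasure_eq_measure ennreal_le_iff[OF b0[unfolded b_def]])
qed


lemma err_zero:
  assumes "N < K"
  shows "err_prob N K T \<alpha> = 0"
proof -
  have "ksubsets N K = {}" unfolding ksubsets_def using assms
  proof (intro equalityI subsetI)
    fix S assume "S \<in> {S. S \<subseteq> {0..<N} \<and> card S = K}"
    hence "card S \<le> card {0..<N}" by (intro card_mono) auto
    thus "S \<in> {}" using assms \<open>S \<in> _\<close> by auto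
  qed auto
  hence e: "{(X, S). ml_error N K T \<alpha> X S} = {}"
    unfolding ml_error_def ml_outputs_def by auto
  show ?thesis unfolding err_prob_def e by simp
qed

lemma final_bound:
  fixes N K T :: nat and \<alpha> c :: real
  assumes K2: "2 \<le> K" and KN: "K \<le> N" and c: "0 < c" "c \<le> 1"
    and T: "(2 / c) * real K * ln (real N) \<le> real T"
  shows "real (N choose K) * (1 - c) ^ T \<le> 1 / real K"
proof -
  have N0: "0 < real N" using K2 KN by simp
  have lnN: "ln (real K) \<le> ln (real N)" "0 \<le> ln (real N)" using K2 KN by auto
  have "real (N choose K) \<le> real N ^ K"
    using binomial_le_pow[OF KN] by (metis of_nat_le_iff of_nat_power)
  also have "\<dots> = exp (real K * ln (real N))"
    using N0 by (simp add: exp_of_nat_mult)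
  finally have a: "real (N choose K) \<le> exp (real K * ln (real N))" .
  have "(1 - c) ^ T \<le> exp (-c) ^ T"
    using c exp_ge_add_one_self[of "-c"] by (intro power_mono) auto
  also have "\<dots> = exp (- (c * real T))" by (simp add: exp_of_nat_mult[symmetric] algebra_simps)
  also have "\<dots> \<le> exp (- (2 * real K * ln (real N)))"
  proof -
    have "c * ((2 / c) * real K * ln (real N)) \<le> c * real T"
      using T c by (intro mult_left_mono) auto
    moreover have "c * ((2 / c) * real K * ln (real N)) = 2 * real K * ln (real N)" using c by simp
    ultimately show ?thesis by simp
  qed
  finally have b: "(1 - c) ^ T \<le> exp (- (2 * real K * ln (real N)))" .
  have "real (N choose K) * (1 - c) ^ T \<le> exp (real K * ln (real N)) * exp (- (2 * real K * ln (real N)))"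
    using a b c by (intro mult_mono) auto
  also have "\<dots> = exp (- (real K * ln (real N)))" by (simp add: exp_add[symmetric])
  also have "\<dots> \<le> exp (- ln (real K))"
  proof -
    have "ln (real N) \<le> real K * ln (real N)"
    proof -
      have "1 * ln (real N) \<le> real K * ln (real N)"
        using lnN K2 by (intro mult_right_mono) auto
      thus ?thesis by simp
    qed
    thus ?thesis using lnN by simp
  qed
  also have "\<dots> = 1 / real K" using K2 by (simp add: exp_minus inverse_eq_divide)
  finally show ?thesis .
qed

lemma err_le:
  fixes N K T :: nat and \<alpha> :: real
  assumes K2: "2 \<le> K" and al: "0 < \<alpha>"
    and T: "(2 / (exp (-2) * (1 - exp (-\<alpha>)))) * real K * ln (real N) \<le> real T"
  shows "err_prob N K T \<alpha> \<le> 1 / real K"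
proof (cases "K \<le> N")
  case True
  have c: "0 < exp (-2) * (1 - exp (-\<alpha>))" "exp (-2) * (1 - exp (-\<alpha>)) \<le> 1"
    using al by (auto intro: mult_le_one)
  show ?thesis
    using err_bound[OF K2 True al, of T] final_bound[OF K2 True c T] by linarith
next
  case False
  thus ?thesis using err_zero[of N K T \<alpha>] by simp
qed

theorem theorem6:
  fixes \<alpha> :: real
  assumes "0 < \<alpha>" and "\<alpha> < 1"
  shows "\<exists>C>0. \<forall>Ns Ks :: nat \<Rightarrow> nat.
           filterlim Ks at_top sequentially \<longrightarrow>
           ((\<lambda>n. real (Ks n) / real (Ns n)) \<longlongrightarrow> 0) sequentially \<longrightarrow>
           ((\<lambda>n. err_prob (Ns n) (Ks n) (nat \<lceil>C * real (Ks n) * ln (real (Ns n))\<rceil>) \<alpha>)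
              \<longlongrightarrow> 0) sequentially"
proof (intro exI[of _ "2 / (exp (-2) * (1 - exp (-\<alpha>)))"] conjI allI impI)
  let ?C = "2 / (exp (-2) * (1 - exp (-\<alpha>)))"
  show "0 < ?C" using assms by simp
  fix Ns Ks :: "nat \<Rightarrow> nat"
  assume K: "filterlim Ks at_top sequentially"
  have ev: "eventually (\<lambda>n. 2 \<le> Ks n) sequentially"
    using K by (simp add: filterlim_at_top)
  have lim: "(\<lambda>n. 1 / real (Ks n)) \<longlonglongrightarrow> 0"
  proof -
    have "filterlim (\<lambda>n. real (Ks n)) at_top sequentially"
      by (rule filterlim_compose[OF filterlim_real_sequentially K])
    hence "((\<lambda>n. inverse (real (Ks n))) \<longlongrightarrow> 0) sequentially"
      by (rule tendsto_inverse_0_at_top)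
    thus ?thesis by (simp add: inverse_eq_divide)
  qed
  show "((\<lambda>n. err_prob (Ns n) (Ks n) (nat \<lceil>?C * real (Ks n) * ln (real (Ns n))\<rceil>) \<alpha>) \<longlongrightarrow> 0) sequentially"
  proof (rule tendsto_sandwich[OF _ _ tendsto_const lim])
    show "eventually (\<lambda>n. 0 \<le> err_prob (Ns n) (Ks n) (nat \<lceil>?C * real (Ks n) * ln (real (Ns n))\<rceil>) \<alpha>) sequentially"
      by (simp add: err_prob_def)
    show "eventually (\<lambda>n. err_prob (Ns n) (Ks n) (nat \<lceil>?C * real (Ks n) * ln (real (Ns n))\<rceil>) \<alpha> \<le> 1 / real (Ks n)) sequentially"
      using ev
    proof eventually_elim
      case (elim n)
      show ?case by (rule err_le[OF elim assms(1)]) (rule real_nat_ceiling_ge)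
    qed
  qed
qed

end
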